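(* For any $\tau_f\in(\tau_2^i,\tau_c)$ there exists a unique $\tau_{po}=\tau_{po}(\tau_f)\in(\tau_1^i,\tau_2^i)$ such that, with $\tau_b=\tau_{po}(\tau_f)$, $$p'(\tau_b)=\frac{2h(\tau_b)-2h(\tau_f)}{\tau_b^2-\tau_f^2}<p'(\tau_f)$$ and Liu's extended entropy condition $\frac{2h(\tau_f)-2h(\tau_b)}{\tau_f^2-\tau_b^2}<\frac{2h(\tau_f)-2h(\tau)}{\tau_f^2-\tau^2}$ for all $\tau\in(\tau_b,\tau_f)$ hold. Moreover, $\frac{d\tau_{po}}{d\tau_f}<0$ for $\tau_f\in(\tau_2^i,\tau_c)$.
   Context: The pressure is $p(\tau)=\frac{\mathcal S}{(\tau-1)^\gamma}-\frac{1}{\tau^2}$ for $\tau>1$, with constants $1<\gamma<2$, $\mathcal S>0$, assumed such that there exist $1<\tau_1^i<\tau_2^i$ with $p'<0$ on $(1,\infty)$, $p''>0$ on $(1,\tau_1^i)\cup(\tau_2^i,\infty)$, $p''<0$ on $(\tau_1^i,\tau_2^i)$. The function $h$ satisfies $h'(\tau)=\tau p'(\tau)$. $\tau_c$ denotes the unique $\tau_c\in(\tau_1^i,\infty)$ with $p'(\tau_1^i)=\frac{2h(\tau_c)-2h(\tau_1^i)}{\tau_c^2-(\tau_1^i)^2}$. *)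

theory Defs
  imports "HOL-Analysis.Analysis"
begin

definition pres :: "real \<Rightarrow> real \<Rightarrow> real \<Rightarrow> real" where
  "pres S \<gamma> \<tau> = S / ((\<tau> - 1) powr \<gamma>) - 1 / \<tau>\<^sup>2"

definition chord :: "(real \<Rightarrow> real) \<Rightarrow> real \<Rightarrow> real \<Rightarrow> real" where
  "chord h a b = (2 * h a - 2 * h b) / (a\<^sup>2 - b\<^sup>2)"

end

theory Submission
  imports Defs
begin

lemma pres_d1: assumes "1 < x"
  shows "(pres S g has_real_derivative (S * (- g) * (x - 1) powr (- g - 1) + 2 / x ^ 3)) (at x)"
proof -
  have d: "((\<lambda>x. S * (x - 1) powr (- g) - 1 / x\<^sup>2) has_real_derivative (S * (- g) * (x - 1) powr (- g - 1) + 2 / x ^ 3)) (at x)"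
    using assms by (auto intro!: derivative_eq_intros simp: field_simps power2_eq_square power3_eq_cube)
  show ?thesis
    by (rule has_field_derivative_transform_within_open[OF d, of "{1<..}"])
       (use assms in \<open>auto simp: pres_def powr_minus_divide\<close>)
qed

lemma pres_d2: assumes "1 < t"
  shows "(deriv (pres S g) has_real_derivative deriv (deriv (pres S g)) t) (at t)"
proof -
  have eq: "deriv (pres S g) x = S * (- g) * (x - 1) powr (- g - 1) + 2 / x ^ 3" if "x \<in> {1<..}" for x
    using pres_d1[of x S g] that DERIV_imp_deriv by auto
  have d: "((\<lambda>x. S * (- g) * (x - 1) powr (- g - 1) + 2 / x ^ 3) has_real_derivative
     S * (- g) * ((- g - 1) * (t - 1) powr (- g - 2)) - 6 / t ^ 4) (at t)"
    using assms by (auto intro!: derivative_eq_intros simp: field_simps)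
  have "(deriv (pres S g) has_real_derivative S * (- g) * ((- g - 1) * (t - 1) powr (- g - 2)) - 6 / t ^ 4) (at t)"
    by (rule has_field_derivative_transform_within_open[OF d, of "{1<..}"]) (use assms eq in auto)
  thus ?thesis using DERIV_imp_deriv by metis
qed

locale tctx =
  fixes P P2 h :: "real \<Rightarrow> real" and t1 t2 tc :: real
  assumes t12: "1 < t1" "t1 < t2"
  and Pd: "\<And>t. 1 < t \<Longrightarrow> (P has_real_derivative P2 t) (at t)"
  and hd: "\<And>t. 1 < t \<Longrightarrow> (h has_real_derivative t * P t) (at t)"
  and pos: "\<And>t. t2 < t \<Longrightarrow> P2 t > 0"
  and neg: "\<And>t. t1 < t \<Longrightarrow> t < t2 \<Longrightarrow> P2 t < 0"
  and tc: "t1 < tc" "P t1 = chord h tc t1"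
  and tcu: "\<And>t. t1 < t \<Longrightarrow> P t1 = chord h t t1 \<Longrightarrow> t = tc"
begin

definition phi :: "real \<Rightarrow> real \<Rightarrow> real" where
  "phi b t = 2 * h t - 2 * h b - P b * (t\<^sup>2 - b\<^sup>2)"

lemma P_inc: assumes "t2 \<le> x" "x < y" shows "P x < P y"
proof -
  obtain z where z: "x < z" "z < y" "P y - P x = (y - x) * P2 z"
    using MVT2[of x y P P2] assms t12 Pd by force
  have "P2 z > 0" using pos z assms by simp
  hence "(y - x) * P2 z > 0" using z by simp
  thus ?thesis using z by linarith
qed

lemma P_dec: assumes "t1 \<le> x" "x < y" "y \<le> t2" shows "P y < P x"
proof -
  obtain z where z: "x < z" "z < y" "P y - P x = (y - x) * P2 z"
    using MVT2[of x y P P2] assms t12 Pd by force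
  have "P2 z < 0" using neg z assms by simp
  hence "(y - x) * P2 z < 0" using z by (simp add: mult_pos_neg)
  thus ?thesis using z by linarith
qed

lemma phi_deriv: assumes "1 < t" shows "(phi b has_real_derivative 2 * t * (P t - P b)) (at t)"
proof -
  have "(phi b has_real_derivative 2 * (t * P t) - 0 - P b * (2 * t - 0)) (at t)"
    unfolding phi_def[abs_def]
    by (auto intro!: derivative_eq_intros hd[OF assms])
  thus ?thesis by (simp add: algebra_simps)
qed

lemma G_deriv: assumes "1 < b" shows "((\<lambda>b. phi b f) has_real_derivative - P2 b * (f\<^sup>2 - b\<^sup>2)) (at b)"
proof -
  have "((\<lambda>b. phi b f) has_real_derivative 0 - 2 * (b * P b) - (P2 b * (f\<^sup>2 - b\<^sup>2) + P b * (0 - 2 * b))) (at b)"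
    unfolding phi_def
    by (auto intro!: derivative_eq_intros hd[OF assms] Pd[OF assms])
  thus ?thesis by (simp add: algebra_simps)
qed

lemma phi_self[simp]: "phi b b = 0" by (simp add: phi_def)

lemma chord_iff: assumes "1 < a" "1 < b" "a \<noteq> b" shows "P b = chord h a b \<longleftrightarrow> phi b a = 0"
proof -
  have "a\<^sup>2 \<noteq> b\<^sup>2" using assms by (smt (verit) power2_eq_square mult_strict_mono)
  hence "a\<^sup>2 - b\<^sup>2 \<noteq> 0" by simp
  thus ?thesis unfolding chord_def phi_def by (simp add: field_simps) (auto simp: algebra_simps)
qed

lemma chord_sym: "chord h a b = chord h b a"
  unfolding chord_def by (metis minus_divide_divide minus_diff_eq)

lemma Pcont: "1 < t \<Longrightarrow> isCont P t" using Pd DERIV_isCont by blast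
lemma hcont: "1 < t \<Longrightarrow> isCont h t" using hd DERIV_isCont by blast

lemma phi_neg_left: assumes "t1 \<le> b" "b < t" "t \<le> t2" shows "phi b t < 0"
proof -
  obtain z where z: "b < z" "z < t" "phi b t - phi b b = (t - b) * (2 * z * (P z - P b))"
    using MVT2[of b t "phi b" "\<lambda>z. 2 * z * (P z - P b)"] assms t12 phi_deriv by force
  have "P z - P b < 0" using P_dec[of b z] z assms by simp
  moreover have "z > 0" using z assms t12 by simp
  ultimately have "2 * z * (P z - P b) < 0" by (simp add: mult_pos_neg)
  hence "(t - b) * (2 * z * (P z - P b)) < 0" using z by (simp add: mult_pos_neg)
  thus ?thesis using z by simp
qed

lemma phi_pos_right: assumes "t2 \<le> t'" "t' < t" "P t' \<ge> P b" shows "phi b t > phi b t'"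
proof -
  obtain z where z: "t' < z" "z < t" "phi b t - phi b t' = (t - t') * (2 * z * (P z - P b))"
    using MVT2[of t' t "phi b" "\<lambda>z. 2 * z * (P z - P b)"] assms t12 phi_deriv by force
  have "P z - P b > 0" using P_inc[of t' z] z assms by simp
  moreover have "z > 0" using z assms t12 by simp
  ultimately have "2 * z * (P z - P b) > 0" by simp
  hence "(t - t') * (2 * z * (P z - P b)) > 0" using z by (simp only: mult_pos_pos diff_gt_0_iff_gt)
  thus ?thesis using z by linarith
qed

lemma phi_cont: "1 < t \<Longrightarrow> isCont (phi b) t" using phi_deriv DERIV_isCont by blast
lemma G_cont: "1 < b \<Longrightarrow> isCont (\<lambda>b. phi b f) b" using G_deriv DERIV_isCont by blast

lemma phi_t1_tc: "phi t1 tc = 0"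
  using chord_iff[of tc t1] tc t12 by simp

lemma tcu': "t1 < t \<Longrightarrow> phi t1 t = 0 \<Longrightarrow> t = tc"
  using chord_iff[of t t1] tcu t12 by simp

lemma tc_gt: "t2 < tc"
proof (rule ccontr)
  assume "\<not> t2 < tc"
  hence "phi t1 tc < 0" using phi_neg_left[of t1 tc] tc by simp
  thus False using phi_t1_tc by simp
qed

lemma phi_t1_neg: assumes "t1 < t" "t < tc" shows "phi t1 t < 0"
proof (cases "t \<le> t2")
  case True thus ?thesis using phi_neg_left[of t1 t] assms by simp
next
  case False
  show ?thesis
  proof (rule ccontr)
    assume "\<not> ?thesis"
    hence "0 \<le> phi t1 t" by simp
    moreover have "phi t1 t2 \<le> 0" using phi_neg_left[of t1 t2] t12 by simp
    ultimately obtain z where z: "t2 \<le> z" "z \<le> t" "phi t1 z = 0"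
      using IVT[of "phi t1" t2 0 t] False t12 phi_cont by force
    hence "z = tc" using tcu' t12 by simp
    thus False using z assms by simp
  qed
qed

lemma G_mono: assumes "t1 \<le> a" "a < c" "c \<le> t2" "t2 < f" shows "phi a f < phi c f"
proof -
  obtain z where z: "a < z" "z < c" "phi c f - phi a f = (c - a) * (- P2 z * (f\<^sup>2 - z\<^sup>2))"
    using MVT2[of a c "\<lambda>b. phi b f" "\<lambda>b. - P2 b * (f\<^sup>2 - b\<^sup>2)"] assms t12 G_deriv by force
  have "P2 z < 0" using neg z assms by simp
  moreover have "z\<^sup>2 < f\<^sup>2" using z assms t12 by (intro power_strict_mono) auto
  ultimately have "- P2 z * (f\<^sup>2 - z\<^sup>2) > 0" by (simp add: mult_neg_pos)
  hence "(c - a) * (- P2 z * (f\<^sup>2 - z\<^sup>2)) > 0" using z by (simp only: mult_pos_pos diff_gt_0_iff_gt)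
  thus ?thesis using z by linarith
qed

lemma root_ex: assumes "t2 < f" "f < tc" shows "\<exists>b. t1 < b \<and> b < t2 \<and> phi b f = 0"
proof -
  have a: "phi t1 f < 0" using phi_t1_neg assms t12 by simp
  have b: "phi t2 f > 0" using phi_pos_right[of t2 f t2] assms by simp
  obtain z where z: "t1 \<le> z" "z \<le> t2" "phi z f = 0"
    using IVT[of "\<lambda>b. phi b f" t1 0 t2] a b t12 G_cont by force
  moreover have "z \<noteq> t1" "z \<noteq> t2" using a b z by auto
  ultimately show ?thesis by force
qed

lemma root_uniq: assumes "t2 < f" "t1 < b" "b < t2" "phi b f = 0" "t1 < b'" "b' < t2" "phi b' f = 0"
  shows "b = b'"
  using G_mono[of b b' f] G_mono[of b' b f] assms by (cases b b' rule: linorder_cases) auto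

lemma root_Pless: assumes "t2 < f" "t1 < b" "b < t2" "phi b f = 0" shows "P b < P f"
proof (rule ccontr)
  assume "\<not> ?thesis"
  hence Pf: "P f \<le> P b" by simp
  have n: "phi b t2 < 0" using phi_neg_left[of b t2] assms by simp
  obtain z where z: "t2 < z" "z < f" "phi b f - phi b t2 = (f - t2) * (2 * z * (P z - P b))"
    using MVT2[of t2 f "phi b" "\<lambda>z. 2 * z * (P z - P b)"] assms t12 phi_deriv by force
  have "P z < P f" using P_inc[of z f] z by simp
  hence "P z - P b < 0" using Pf by simp
  moreover have "z > 0" using z t12 by simp
  ultimately have "2 * z * (P z - P b) < 0" by (simp add: mult_pos_neg)
  hence "(f - t2) * (2 * z * (P z - P b)) < 0" using z by (simp add: mult_pos_neg)
  thus False using z n assms by linarith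
qed

lemma root_entropy: assumes "t2 < f" "t1 < b" "b < t2" "phi b f = 0" "b < t" "t < f"
  shows "phi b t < 0"
proof (cases "t \<le> t2")
  case True thus ?thesis using phi_neg_left[of b t] assms by simp
next
  case False
  show ?thesis
  proof (rule ccontr)
    assume "\<not> ?thesis"
    hence ge: "phi b t \<ge> 0" by simp
    have n: "phi b t2 < 0" using phi_neg_left[of b t2] assms by simp
    obtain z where z: "t2 < z" "z < t" "phi b t - phi b t2 = (t - t2) * (2 * z * (P z - P b))"
      using MVT2[of t2 t "phi b" "\<lambda>z. 2 * z * (P z - P b)"] False t12 phi_deriv by force
    have "(t - t2) * (2 * z * (P z - P b)) > 0" using z n ge by linarith
    hence "2 * z * (P z - P b) > 0" using False by (simp add: zero_less_mult_iff)
    hence "P z > P b" using z t12 by (simp add: zero_less_mult_iff)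
    moreover have "P z < P t" using P_inc[of z t] z by simp
    ultimately have "phi b f > phi b t" using phi_pos_right[of t f b] False assms by simp
    thus False using ge assms by simp
  qed
qed

definition beta :: "real \<Rightarrow> real" where
  "beta f = (THE b. t1 < b \<and> b < t2 \<and> phi b f = 0)"

lemma beta: assumes "t2 < f" "f < tc" shows "t1 < beta f \<and> beta f < t2 \<and> phi (beta f) f = 0"
proof -
  have "\<exists>!b. t1 < b \<and> b < t2 \<and> phi b f = 0"
    using root_ex[OF assms] root_uniq[of f] assms by blast
  thus ?thesis unfolding beta_def by (rule theI')
qed

lemma beta_eq: assumes "t2 < f" "f < tc" "t1 < b" "b < t2" "phi b f = 0" shows "beta f = b"
  using beta[OF assms(1,2)] root_uniq[of f] assms by blast

lemma beta_cont: assumes "t2 < f0" "f0 < tc" shows "isCont beta f0"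
  unfolding isCont_def tendsto_iff
proof (intro allI impI)
  fix e :: real assume e: "e > 0"
  define b0 where "b0 = beta f0"
  have b0: "t1 < b0" "b0 < t2" "phi b0 f0 = 0" using beta[OF assms] b0_def by auto
  define d where "d = min e (min (b0 - t1) (t2 - b0)) / 2"
  have m: "min e (min (b0 - t1) (t2 - b0)) \<le> e" "min e (min (b0 - t1) (t2 - b0)) \<le> b0 - t1"
    "min e (min (b0 - t1) (t2 - b0)) \<le> t2 - b0" "min e (min (b0 - t1) (t2 - b0)) > 0" using b0 e by auto
  have d: "d > 0" "d < e" "t1 < b0 - d" "b0 + d < t2" using m unfolding d_def by linarith+
  have l: "phi (b0 - d) f0 < 0" using G_mono[of "b0 - d" b0 f0] d b0 assms by simp
  have u: "phi (b0 + d) f0 > 0" using G_mono[of b0 "b0 + d" f0] d b0 assms by simp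
  have ev1: "eventually (\<lambda>f. phi (b0 - d) f < 0) (at f0)"
    using order_tendstoD(2)[OF phi_cont[of f0 "b0 - d", unfolded isCont_def] l] assms t12 by simp
  have ev2: "eventually (\<lambda>f. phi (b0 + d) f > 0) (at f0)"
    using order_tendstoD(1)[OF phi_cont[of f0 "b0 + d", unfolded isCont_def] u] assms t12 by simp
  have ev3: "eventually (\<lambda>f. t2 < f) (at f0)"
    using order_tendstoD(1)[OF tendsto_ident_at assms(1)] .
  have ev4: "eventually (\<lambda>f. f < tc) (at f0)"
    using order_tendstoD(2)[OF tendsto_ident_at assms(2)] .
  show "eventually (\<lambda>f. dist (beta f) (beta f0) < e) (at f0)"
    using ev1 ev2 ev3 ev4
  proof eventually_elim
    case (elim f)
    obtain z where z: "b0 - d \<le> z" "z \<le> b0 + d" "phi z f = 0"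
      using IVT[of "\<lambda>b. phi b f" "b0 - d" 0 "b0 + d"] elim d t12 b0 G_cont by force
    have "beta f = z" using beta_eq[of f z] z elim d by simp
    thus ?case using z d b0_def by (simp add: dist_real_def abs_le_iff)
  qed
qed

lemma beta_deriv: assumes "t2 < f0" "f0 < tc" shows "\<exists>D. (beta has_real_derivative D) (at f0) \<and> D < 0"
proof -
  define b0 where "b0 = beta f0"
  have b0: "t1 < b0" "b0 < t2" "phi b0 f0 = 0" using beta[OF assms] b0_def by auto
  obtain sP where sP: "\<forall>z. P z - P b0 = sP z * (z - b0)" "isCont sP b0" "sP b0 = P2 b0"
    using Pd[of b0] b0 t12 CARAT_DERIV by (metis less_trans)
  obtain sH where sH: "\<forall>z. h z - h b0 = sH z * (z - b0)" "isCont sH b0" "sH b0 = b0 * P b0"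
    using hd[of b0] b0 t12 CARAT_DERIV by (metis less_trans)
  obtain sF where sF: "\<forall>z. h z - h f0 = sF z * (z - f0)" "isCont sF f0" "sF f0 = f0 * P f0"
    using hd[of f0] assms t12 CARAT_DERIV by (metis less_trans)
  define N where "N f = 2 * sF f - P b0 * (f + f0)" for f
  define M where "M f = - 2 * sH (beta f) - sP (beta f) * (f\<^sup>2 - (beta f)\<^sup>2) + P b0 * (beta f + b0)" for f
  have key: "(beta f - b0) * M f = - (f - f0) * N f" if f: "t2 < f" "f < tc" for f
  proof -
    define b where "b = beta f"
    have "phi b f = 0" using beta[OF f] b_def by simp
    hence "0 = phi b f - phi b0 f0" using b0 by simp
    also have "\<dots> = 2 * (h f - h f0) - 2 * (h b - h b0) - (P b * (f\<^sup>2 - b\<^sup>2) - P b0 * (f0\<^sup>2 - b0\<^sup>2))"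
      unfolding phi_def by (simp add: algebra_simps)
    also have "\<dots> = 2 * (sF f * (f - f0)) - 2 * (sH b * (b - b0))
        - ((P b0 + sP b * (b - b0)) * (f\<^sup>2 - b\<^sup>2) - P b0 * (f0\<^sup>2 - b0\<^sup>2))"
      using sF(1) sH(1) sP(1) by (metis add_diff_cancel_left' diff_add_cancel)
    also have "\<dots> = (b - b0) * M f + (f - f0) * N f"
      unfolding M_def N_def b_def[symmetric] by (simp add: algebra_simps power2_eq_square)
    finally show ?thesis unfolding b_def by linarith
  qed
  have M0: "M f0 = - P2 b0 * (f0\<^sup>2 - b0\<^sup>2)"
    unfolding M_def b0_def[symmetric] using sH sP by (simp add: algebra_simps)
  have "P2 b0 < 0" using neg b0 by simp
  moreover have "b0\<^sup>2 < f0\<^sup>2" using b0 assms t12 by (intro power_strict_mono) auto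
  ultimately have M0pos: "M f0 > 0" unfolding M0 by (simp add: mult_neg_pos)
  have N0: "N f0 = 2 * f0 * (P f0 - P b0)" unfolding N_def using sF by (simp add: algebra_simps)
  have "P f0 - P b0 > 0" using root_Pless[of f0 b0] b0 assms by simp
  hence N0pos: "N f0 > 0" unfolding N0 using assms t12 by simp
  have cb: "isCont beta f0" using beta_cont[OF assms] .
  have cM: "isCont M f0" unfolding M_def
    using isCont_o2[OF cb, of sH] isCont_o2[OF cb, of sP] sH(2) sP(2) cb b0_def
    by (intro continuous_intros) auto
  have cN: "isCont N f0" unfolding N_def using sF(2) by (intro continuous_intros) auto
  have lim: "((\<lambda>f. - N f / M f) \<longlongrightarrow> - N f0 / M f0) (at f0)"
    using cM cN M0pos unfolding isCont_def by (intro tendsto_intros) auto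
  have evM: "eventually (\<lambda>f. M f > 0) (at f0)"
    using order_tendstoD(1)[OF cM[unfolded isCont_def] M0pos] .
  have ev3: "eventually (\<lambda>f. t2 < f) (at f0)"
    using order_tendstoD(1)[OF tendsto_ident_at assms(1)] .
  have ev4: "eventually (\<lambda>f. f < tc) (at f0)"
    using order_tendstoD(2)[OF tendsto_ident_at assms(2)] .
  have ev5: "eventually (\<lambda>f. f \<noteq> f0) (at f0)" by (simp add: eventually_at_filter)
  have "eventually (\<lambda>f. - N f / M f = (beta f - beta f0) / (f - f0)) (at f0)"
    using evM ev3 ev4 ev5
  proof eventually_elim
    case (elim f)
    have "(beta f - b0) * M f = - (f - f0) * N f" using key elim by simp
    thus ?case using elim b0_def by (simp add: field_simps)
  qed
  hence "((\<lambda>f. (beta f - beta f0) / (f - f0)) \<longlongrightarrow> - N f0 / M f0) (at f0)"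
    by (rule Lim_transform_eventually[OF lim])
  hence "(beta has_real_derivative - N f0 / M f0) (at f0)"
    unfolding has_field_derivative_iff .
  moreover have "- N f0 / M f0 < 0" using N0pos M0pos by simp
  ultimately show ?thesis by blast
qed

lemma root_props: assumes f: "t2 < f" "f < tc" and b: "t1 < b" "b < t2" "phi b f = 0"
  shows "P b = chord h b f \<and> chord h b f < P f \<and> (\<forall>\<tau>. b < \<tau> \<and> \<tau> < f \<longrightarrow> chord h f b < chord h f \<tau>)"
proof -
  have c: "P b = chord h f b" using chord_iff[of f b] f b t12 by simp
  have 1: "P b = chord h b f" using c chord_sym by simp
  have 2: "chord h b f < P f" using 1 root_Pless[of f b] f b by simp
  have 3: "chord h f b < chord h f \<tau>" if t: "b < \<tau>" "\<tau> < f" for \<tau>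
  proof -
    have n: "phi b \<tau> < 0" using root_entropy[of f b \<tau>] f b t by simp
    have "\<tau>\<^sup>2 < f\<^sup>2" using t b t12 by (intro power_strict_mono) auto
    hence pos: "f\<^sup>2 - \<tau>\<^sup>2 > 0" by simp
    have "P b * (f\<^sup>2 - \<tau>\<^sup>2) < 2 * h f - 2 * h \<tau>"
      using n b(3) unfolding phi_def by (simp add: algebra_simps)
    hence "P b < (2 * h f - 2 * h \<tau>) / (f\<^sup>2 - \<tau>\<^sup>2)" using pos by (simp add: pos_less_divide_eq)
    thus ?thesis using c unfolding chord_def by simp
  qed
  show ?thesis using 1 2 3 by blast
qed

lemma main:
  "\<exists>\<tau>po :: real \<Rightarrow> real.
     (\<forall>\<tau>f. t2 < \<tau>f \<and> \<tau>f < tc \<longrightarrow>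
        (\<exists>!\<tau>b. t1 < \<tau>b \<and> \<tau>b < t2 \<and>
           P \<tau>b = chord h \<tau>b \<tau>f \<and>
           chord h \<tau>b \<tau>f < P \<tau>f \<and>
           (\<forall>\<tau>. \<tau>b < \<tau> \<and> \<tau> < \<tau>f \<longrightarrow> chord h \<tau>f \<tau>b < chord h \<tau>f \<tau>)) \<and>
        t1 < \<tau>po \<tau>f \<and> \<tau>po \<tau>f < t2 \<and>
        P (\<tau>po \<tau>f) = chord h (\<tau>po \<tau>f) \<tau>f \<and>
        chord h (\<tau>po \<tau>f) \<tau>f < P \<tau>f \<and>
        (\<forall>\<tau>. \<tau>po \<tau>f < \<tau> \<and> \<tau> < \<tau>f \<longrightarrow> chord h \<tau>f (\<tau>po \<tau>f) < chord h \<tau>f \<tau>) \<and>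
        (\<exists>D. (\<tau>po has_real_derivative D) (at \<tau>f) \<and> D < 0))"
proof (intro exI[of _ beta] allI impI)
  fix f assume f: "t2 < f \<and> f < tc"
  have B: "t1 < beta f" "beta f < t2" "phi (beta f) f = 0" using beta f by auto
  have R: "P (beta f) = chord h (beta f) f \<and> chord h (beta f) f < P f \<and>
      (\<forall>\<tau>. beta f < \<tau> \<and> \<tau> < f \<longrightarrow> chord h f (beta f) < chord h f \<tau>)"
    using root_props[of f "beta f"] f B by simp
  have U: "\<exists>!b. t1 < b \<and> b < t2 \<and> P b = chord h b f \<and> chord h b f < P f \<and>
           (\<forall>\<tau>. b < \<tau> \<and> \<tau> < f \<longrightarrow> chord h f b < chord h f \<tau>)"
  proof (rule ex1I[of _ "beta f"])
    show "t1 < beta f \<and> beta f < t2 \<and> P (beta f) = chord h (beta f) f \<and> chord h (beta f) f < P f \<and>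
           (\<forall>\<tau>. beta f < \<tau> \<and> \<tau> < f \<longrightarrow> chord h f (beta f) < chord h f \<tau>)" using B R by blast
  next
    fix b assume b: "t1 < b \<and> b < t2 \<and> P b = chord h b f \<and> chord h b f < P f \<and>
           (\<forall>\<tau>. b < \<tau> \<and> \<tau> < f \<longrightarrow> chord h f b < chord h f \<tau>)"
    have "P b = chord h f b" using b chord_sym by metis
    hence "phi b f = 0" using chord_iff[of f b] b f t12 by simp
    thus "b = beta f" using beta_eq[of f b] b f by simp
  qed
  show "(\<exists>!b. t1 < b \<and> b < t2 \<and> P b = chord h b f \<and> chord h b f < P f \<and>
           (\<forall>\<tau>. b < \<tau> \<and> \<tau> < f \<longrightarrow> chord h f b < chord h f \<tau>)) \<and>
        t1 < beta f \<and> beta f < t2 \<and>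
        P (beta f) = chord h (beta f) f \<and>
        chord h (beta f) f < P f \<and>
        (\<forall>\<tau>. beta f < \<tau> \<and> \<tau> < f \<longrightarrow> chord h f (beta f) < chord h f \<tau>) \<and>
        (\<exists>D. (beta has_real_derivative D) (at f) \<and> D < 0)"
    using U B R beta_deriv[of f] f by blast
qed

end

theorem proposition3p3:
  fixes S \<gamma> \<tau>1 \<tau>2 \<tau>c :: real and h :: "real \<Rightarrow> real"
  assumes gam: "1 < \<gamma>" "\<gamma> < 2" and S: "S > 0"
    and t12: "1 < \<tau>1" "\<tau>1 < \<tau>2"
    and p1: "\<forall>\<tau>>1. deriv (pres S \<gamma>) \<tau> < 0"
    and p2pos: "\<forall>\<tau>. (1 < \<tau> \<and> \<tau> < \<tau>1) \<or> \<tau>2 < \<tau> \<longrightarrow> deriv (deriv (pres S \<gamma>)) \<tau> > 0"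
    and p2neg: "\<forall>\<tau>. \<tau>1 < \<tau> \<and> \<tau> < \<tau>2 \<longrightarrow> deriv (deriv (pres S \<gamma>)) \<tau> < 0"
    and hder: "\<forall>\<tau>>1. (h has_real_derivative \<tau> * deriv (pres S \<gamma>) \<tau>) (at \<tau>)"
    and tc: "\<tau>1 < \<tau>c" "deriv (pres S \<gamma>) \<tau>1 = chord h \<tau>c \<tau>1"
    and tc_unique: "\<forall>t. \<tau>1 < t \<and> deriv (pres S \<gamma>) \<tau>1 = chord h t \<tau>1 \<longrightarrow> t = \<tau>c"
  shows "\<exists>\<tau>po :: real \<Rightarrow> real.
     (\<forall>\<tau>f. \<tau>2 < \<tau>f \<and> \<tau>f < \<tau>c \<longrightarrow>
        (\<exists>!\<tau>b. \<tau>1 < \<tau>b \<and> \<tau>b < \<tau>2 \<and>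
           deriv (pres S \<gamma>) \<tau>b = chord h \<tau>b \<tau>f \<and>
           chord h \<tau>b \<tau>f < deriv (pres S \<gamma>) \<tau>f \<and>
           (\<forall>\<tau>. \<tau>b < \<tau> \<and> \<tau> < \<tau>f \<longrightarrow> chord h \<tau>f \<tau>b < chord h \<tau>f \<tau>)) \<and>
        \<tau>1 < \<tau>po \<tau>f \<and> \<tau>po \<tau>f < \<tau>2 \<and>
        deriv (pres S \<gamma>) (\<tau>po \<tau>f) = chord h (\<tau>po \<tau>f) \<tau>f \<and>
        chord h (\<tau>po \<tau>f) \<tau>f < deriv (pres S \<gamma>) \<tau>f \<and>
        (\<forall>\<tau>. \<tau>po \<tau>f < \<tau> \<and> \<tau> < \<tau>f \<longrightarrow> chord h \<tau>f (\<tau>po \<tau>f) < chord h \<tau>f \<tau>) \<and>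
        (\<exists>D. (\<tau>po has_real_derivative D) (at \<tau>f) \<and> D < 0))"
  proof -
  interpret tctx "deriv (pres S \<gamma>)" "deriv (deriv (pres S \<gamma>))" h \<tau>1 \<tau>2 \<tau>c
  proof
    show "1 < \<tau>1" "\<tau>1 < \<tau>2" using t12 by auto
    show "\<And>t. 1 < t \<Longrightarrow> (deriv (pres S \<gamma>) has_real_derivative deriv (deriv (pres S \<gamma>)) t) (at t)"
      by (rule pres_d2)
    show "\<And>t. 1 < t \<Longrightarrow> (h has_real_derivative t * deriv (pres S \<gamma>) t) (at t)" using hder by auto
    show "\<And>t. \<tau>2 < t \<Longrightarrow> deriv (deriv (pres S \<gamma>)) t > 0" using p2pos by auto
    show "\<And>t. \<tau>1 < t \<Longrightarrow> t < \<tau>2 \<Longrightarrow> deriv (deriv (pres S \<gamma>)) t < 0" using p2neg by auto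
    show "\<tau>1 < \<tau>c" "deriv (pres S \<gamma>) \<tau>1 = chord h \<tau>c \<tau>1" using tc by auto
    show "\<And>t. \<tau>1 < t \<Longrightarrow> deriv (pres S \<gamma>) \<tau>1 = chord h t \<tau>1 \<Longrightarrow> t = \<tau>c" using tc_unique by auto
  qed
  show ?thesis by (rule main)
qed

end
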